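(* Let $M := e_1e_2^\top + e_2e_1^\top\in\mathbb{R}^{d\times d}$. Assume $\alpha \le \frac12$, $a_0\ne0$, $|a_0|\le 1$, $w_0$ a unit vector, and $\mathrm{sign}(a_0) = \mathrm{sign}(q_0)$. Consider the updates \[ a_{t+1} = \mathrm{clip}_{[-1,1]}\big(a_t + \tfrac\alpha2 q_t\big),\quad w_{t+1} = \frac{w_t + \alpha a_t Mw_t}{\|w_t + \alpha a_t M w_t\|_2},\quad q_t := w_t^\top M w_t. \] Let $u_a := \frac{e_1 + \mathrm{sign}(a_0)e_2}{\sqrt2}$, $\gamma_t := |\langle w_t, u_a\rangle|$ and $r_t := \frac{\sqrt{1-\gamma_t^2}}{\gamma_t}$. Then: (1) for all $t\ge0$, $\mathrm{sign}(a_t) = \mathrm{sign}(q_t) = \mathrm{sign}(a_0)$, and $|a_t|$ is non-decreasing; (2) for all $t\ge0$, $r_{t+1} \le \frac{1}{1+\alpha|a_t|}r_t \le \frac{1}{1+\alpha|a_0|}r_t$. Consequently, for any $\varepsilon\in(0,1/2)$, after \[ T_2 := \left\lceil \frac{2}{\alpha|a_0|}\log\Big(\frac{1}{\gamma_0^2\varepsilon}\Big)\right\rceil \] steps we have $\gamma_{T_2}^2 \ge 1-\varepsilon$.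
   Context: $M = \mathbb{E}[yxx^\top]$ is the population moment matrix for $x$ uniform on $\{\pm1\}^d$ and $y = x_1x_2$; these are the Phase-2 (population) projected gradient updates for $f(x) = \frac12 a(w^\top x)^2$ under correlation loss. *)

theory Defs
  imports "HOL-Analysis.Analysis"
begin

definition ebasis :: "'n::finite \<Rightarrow> real^'n" where
  "ebasis k = axis k 1"

text \<open>M = e_1 e_2^T + e_2 e_1^T, where i1, i2 are the indices of the first two coordinates.\<close>
definition Mmat :: "'n::finite \<Rightarrow> 'n \<Rightarrow> real^'n^'n" where
  "Mmat i1 i2 = (\<chi> i j. ebasis i1 $ i * ebasis i2 $ j + ebasis i2 $ i * ebasis i1 $ j)"

definition clip :: "real \<Rightarrow> real \<Rightarrow> real \<Rightarrow> real" where
  "clip lo hi x = max lo (min hi x)"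

end

theory Submission
  imports Defs
begin
lemma Mv: "i1 \<noteq> (i2::'n::finite) \<Longrightarrow> (Mmat i1 i2 *v v) $ i = (if i = i1 then v$i2 else if i = i2 then v$i1 else 0)"
  unfolding Mmat_def matrix_vector_mult_def ebasis_def axis_def
  by (simp add: if_distrib[of "\<lambda>x. x * _"] sum.delta cong: if_cong)
lemma nsplit: "i1 \<noteq> (i2::'n::finite) \<Longrightarrow> (norm (v::real^'n))\<^sup>2 = (v$i1)\<^sup>2 + (v$i2)\<^sup>2 + (\<Sum>i\<in>-{i1,i2}. (v$i)\<^sup>2)"
proof -
  assume "i1 \<noteq> i2"
  have "(norm v)\<^sup>2 = (\<Sum>i\<in>UNIV. (v$i)\<^sup>2)" unfolding power2_norm_eq_inner inner_vec_def by (simp add: power2_eq_square)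
  also have "\<dots> = (\<Sum>i\<in>UNIV - {i1,i2}. (v$i)\<^sup>2) + (\<Sum>i\<in>{i1,i2}. (v$i)\<^sup>2)"
    by (rule sum.subset_diff) auto
  finally show ?thesis using \<open>i1 \<noteq> i2\<close> by (simp add: Compl_eq_Diff_UNIV)
qed
lemma inu: "i1 \<noteq> (i2::'n::finite) \<Longrightarrow> (v::real^'n) \<bullet> ((1 / sqrt 2) *\<^sub>R (ebasis i1 + s *\<^sub>R ebasis i2)) = (v$i1 + s * v$i2) / sqrt 2"
  unfolding inner_vec_def ebasis_def axis_def
  by (simp add: if_distrib[of "\<lambda>x. _ * x"] if_distrib[of "\<lambda>x. x / _"] add_divide_distrib sum.delta sum.distrib algebra_simps sum_distrib_left[symmetric] cong: if_cong)
lemma sum_two: "i1 \<noteq> i2 \<Longrightarrow> (\<Sum>i\<in>(UNIV::'n::finite set). if i = i1 then A else if i = i2 then B else 0) = (A::real) + B"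
proof -
  assume "i1 \<noteq> i2"
  then have "(\<lambda>i. if i = i1 then A else if i = i2 then B else 0) = (\<lambda>i. (if i = i1 then A else 0) + (if i = i2 then B else 0))" by auto
  then show ?thesis by (simp only:) (simp add: sum.distrib)
qed
lemma inM: "i1 \<noteq> (i2::'n::finite) \<Longrightarrow> (v::real^'n) \<bullet> (Mmat i1 i2 *v v) = 2 * v$i1 * v$i2"
  unfolding inner_vec_def
  by (simp add: Mv if_distrib[of "\<lambda>x. _ * x"] sum_two cong: if_cong)
lemma scale_sq: "(N::real) \<noteq> 0 \<Longrightarrow> (x/N + s*(y/N))\<^sup>2/2 = ((x+s*y)\<^sup>2/2)/N\<^sup>2"
  by (simp add: field_simps power2_eq_square)
lemma scale_sq2: "(N::real) \<noteq> 0 \<Longrightarrow> (x/N - s*(y/N))\<^sup>2/2 = ((x-s*y)\<^sup>2/2)/N\<^sup>2"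
  by (simp add: field_simps power2_eq_square)
lemma div_cancelN: "(N::real) \<noteq> 0 \<Longrightarrow> (x/N)/(y/N) = x/y"
  by (cases "y=0") (auto simp: field_simps)

lemma pq_step:
  fixes P Q Z k N2 :: real
  assumes PQ: "Q < P" and Q0: "0 \<le> Q" and Z0: "0 \<le> Z" and k0: "0 \<le> k" and k1: "k \<le> 1/2"
    and N2: "N2 = (1+k)\<^sup>2*P + (1-k)\<^sup>2*Q + Z"
  shows "(1-k)\<^sup>2*Q/N2 < (1+k)\<^sup>2*P/N2"
    and "(1+k)\<^sup>2*P/N2 + (1-k)\<^sup>2*Q/N2 + Z/N2 = 1"
    and "sqrt (((1-k)\<^sup>2*Q/N2 + Z/N2) / ((1+k)\<^sup>2*P/N2)) \<le> sqrt ((Q+Z)/P) / (1+k)"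
proof -
  have a: "(1-k)\<^sup>2 \<le> 1" using k0 k1 by (intro power_le_one) auto
  have b: "1 \<le> (1+k)\<^sup>2" using k0 by (intro one_le_power) auto
  have c: "(1-k)\<^sup>2*Q \<le> Q" using a Q0 by (simp add: mult_left_le_one_le)
  have d: "P \<le> (1+k)\<^sup>2*P" using b PQ Q0 by (simp add: mult_le_cancel_right1)
  have N: "0 < N2" using N2 c d PQ Q0 Z0 by (smt (verit) zero_le_power2 mult_nonneg_nonneg)
  show "(1-k)\<^sup>2*Q/N2 < (1+k)\<^sup>2*P/N2" using c d PQ N by (simp add: divide_strict_right_mono)
  have "(1+k)\<^sup>2*P/N2 + (1-k)\<^sup>2*Q/N2 + Z/N2 = ((1+k)\<^sup>2*P + (1-k)\<^sup>2*Q + Z)/N2"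
    by (simp add: add_divide_distrib)
  then show "(1+k)\<^sup>2*P/N2 + (1-k)\<^sup>2*Q/N2 + Z/N2 = 1" using N N2 by simp
  have P: "0 < P" using PQ Q0 by linarith
  have e: "((1-k)\<^sup>2*Q/N2 + Z/N2) / ((1+k)\<^sup>2*P/N2) = ((1-k)\<^sup>2*Q + Z) / ((1+k)\<^sup>2*P)"
    using N by (simp add: add_divide_distrib[symmetric] div_cancelN)
  have f: "((1-k)\<^sup>2*Q + Z) / ((1+k)\<^sup>2*P) \<le> ((Q+Z)/P) / (1+k)\<^sup>2"
  proof -
    have "0 \<le> (1+k)\<^sup>2*P" using P by simp
    then have "((1-k)\<^sup>2*Q + Z) / ((1+k)\<^sup>2*P) \<le> (Q + Z) / ((1+k)\<^sup>2*P)"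
      using c by (intro divide_right_mono) auto
    also have "\<dots> = ((Q+Z)/P) / (1+k)\<^sup>2" by (simp add: mult.commute)
    finally show ?thesis .
  qed
  have "sqrt (((1-k)\<^sup>2*Q/N2 + Z/N2) / ((1+k)\<^sup>2*P/N2)) \<le> sqrt (((Q+Z)/P) / (1+k)\<^sup>2)"
    unfolding e by (rule real_sqrt_le_mono[OF f])
  also have "\<dots> = sqrt ((Q+Z)/P) / (1+k)" using k0 by (simp add: real_sqrt_divide real_sqrt_mult)
  finally show "sqrt (((1-k)\<^sup>2*Q/N2 + Z/N2) / ((1+k)\<^sup>2*P/N2)) \<le> sqrt ((Q+Z)/P) / (1+k)" .
qed
lemma final_bound:
  fixes P0 R0 RT k \<epsilon> :: real and T :: nat
  assumes P0: "0 < P0" "P0 \<le> 1" and e: "0 < \<epsilon>" "\<epsilon> < 1/2" and k: "0 < k" "k \<le> 1/2"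
    and RT: "0 \<le> RT" "RT \<le> R0 / (1+k)^T" and R0: "R0\<^sup>2 \<le> 1/P0"
    and T: "T = nat \<lceil>2 / k * ln (1 / (P0 * \<epsilon>))\<rceil>"
  shows "RT\<^sup>2 \<le> \<epsilon>"
proof -
  define L where "L = ln (1 / (P0 * \<epsilon>))"
  have pe: "0 < P0 * \<epsilon>" "P0 * \<epsilon> \<le> 1" using P0 e by (auto intro: mult_le_one)
  have L0: "0 \<le> L" unfolding L_def using pe by simp
  have expL: "exp L = 1 / (P0 * \<epsilon>)" unfolding L_def using pe by simp
  have "2 / k * L \<le> real T" unfolding T L_def by (rule real_nat_ceiling_ge)
  then have kT: "2 * L \<le> k * real T" using k by (simp add: field_simps)
  have "k - k\<^sup>2 \<le> ln (1 + k)" using k by (intro ln_one_plus_pos_lower_bound) auto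
  moreover have "k / 2 \<le> k - k\<^sup>2" using k by (simp add: power2_eq_square)
  ultimately have lnk: "k / 2 \<le> ln (1 + k)" by linarith
  have "(1+k)^(2*T) = exp (real (2*T) * ln (1+k))" using k by (subst exp_of_nat_mult) simp
  moreover have "L \<le> real (2*T) * ln (1+k)"
  proof -
    have "real (2*T) * (k/2) \<le> real (2*T) * ln (1+k)" using lnk by (intro mult_left_mono) auto
    moreover have "real (2*T) * (k/2) = k * real T" by simp
    ultimately show ?thesis using kT L0 by linarith
  qed
  ultimately have big: "1 / (P0 * \<epsilon>) \<le> (1+k)^(2*T)" using expL by (metis exp_le_cancel_iff)
  have pk: "0 < (1+k)^T" using k by simp
  have power_mult_pow2: "((1+k)^T)\<^sup>2 = (1+k)^(2*T)" by (metis power_mult mult.commute)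
  have "RT\<^sup>2 \<le> (R0 / (1+k)^T)\<^sup>2" using RT by (intro power_mono) auto
  also have "\<dots> = R0\<^sup>2 / (1+k)^(2*T)" by (simp add: power_divide flip: power_mult_pow2)
  also have "\<dots> \<le> (1/P0) / (1 / (P0 * \<epsilon>))"
    using R0 big pe P0 by (intro frac_le) auto
  also have "\<dots> = \<epsilon>" using P0 e by simp
  finally show ?thesis .
qed
theorem lemma10:
  fixes i1 i2 :: "'n::finite"
    and \<alpha> :: real
    and a :: "nat \<Rightarrow> real"
    and w :: "nat \<Rightarrow> real^'n"
    and q \<gamma> r :: "nat \<Rightarrow> real"
    and u :: "real^'n"
  assumes i12: "i1 \<noteq> i2"
    and alpha_pos: "0 < \<alpha>" and alpha_le: "\<alpha> \<le> 1/2"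
    and a0_ne: "a 0 \<noteq> 0" and a0_le: "\<bar>a 0\<bar> \<le> 1"
    and w0_unit: "norm (w 0) = 1"
    and q_def: "\<And>t. q t = w t \<bullet> (Mmat i1 i2 *v w t)"
    and sign0: "sgn (a 0) = sgn (q 0)"
    and a_step: "\<And>t. a (Suc t) = clip (-1) 1 (a t + \<alpha> / 2 * q t)"
    and w_step: "\<And>t. w (Suc t) =
        (w t + (\<alpha> * a t) *\<^sub>R (Mmat i1 i2 *v w t)) /\<^sub>R
          norm (w t + (\<alpha> * a t) *\<^sub>R (Mmat i1 i2 *v w t))"
    and u_def: "u = (1 / sqrt 2) *\<^sub>R (ebasis i1 + sgn (a 0) *\<^sub>R ebasis i2)"
    and gamma_def: "\<And>t. \<gamma> t = \<bar>w t \<bullet> u\<bar>"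
    and r_def: "\<And>t. r t = sqrt (1 - (\<gamma> t)\<^sup>2) / \<gamma> t"
  shows "(\<forall>t. sgn (a t) = sgn (a 0) \<and> sgn (q t) = sgn (a 0) \<and> \<bar>a t\<bar> \<le> \<bar>a (Suc t)\<bar>)
    \<and> (\<forall>t. r (Suc t) \<le> r t / (1 + \<alpha> * \<bar>a t\<bar>)
           \<and> r t / (1 + \<alpha> * \<bar>a t\<bar>) \<le> r t / (1 + \<alpha> * \<bar>a 0\<bar>))
    \<and> (\<forall>\<epsilon>. 0 < \<epsilon> \<and> \<epsilon> < 1/2 \<longrightarrow>
          (\<gamma> (nat \<lceil>2 / (\<alpha> * \<bar>a 0\<bar>) * ln (1 / ((\<gamma> 0)\<^sup>2 * \<epsilon>))\<rceil>))\<^sup>2 \<ge> 1 - \<epsilon>)"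
proof -
  define s where "s = sgn (a 0)"
  have s1: "s = 1 \<or> s = -1" using a0_ne by (simp add: s_def sgn_if)
  define M where "M = Mmat i1 i2"
  define PV where "PV v = (v$i1 + s * v$i2)\<^sup>2 / 2" for v :: "real^'n"
  define QV where "QV v = (v$i1 - s * v$i2)\<^sup>2 / 2" for v :: "real^'n"
  define ZV where "ZV v = (\<Sum>i\<in>-{i1,i2}. (v$i)\<^sup>2)" for v :: "real^'n"
  define P where "P t = PV (w t)" for t
  define Q where "Q t = QV (w t)" for t
  define Z where "Z t = ZV (w t)" for t
  have ZV0: "0 \<le> ZV v" for v by (simp add: ZV_def sum_nonneg)
  have QV0: "0 \<le> QV v" for v by (simp add: QV_def)
  have nrmV: "(norm v)\<^sup>2 = PV v + QV v + ZV v" for v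
    using nsplit[OF i12, of v] s1 by (auto simp: PV_def QV_def ZV_def power2_eq_square field_simps)
  have qV: "s * (v \<bullet> (M *v v)) = PV v - QV v" for v
    using inM[OF i12, of v] s1 by (auto simp: M_def PV_def QV_def power2_eq_square field_simps)
  have gV: "\<bar>v \<bullet> u\<bar> = sqrt (PV v)" for v
    using inu[OF i12, of v s] by (simp add: u_def s_def PV_def real_sqrt_divide)
  have hq: "s * q t = P t - Q t" for t using qV q_def by (simp add: P_def Q_def M_def)
  have hg: "\<gamma> t = sqrt (P t)" for t using gV gamma_def by (simp add: P_def)
  have hr: "r t = sqrt ((Q t + Z t) / P t)" if "P t + Q t + Z t = 1" "0 < P t" for t
  proof -
    have "1 - (\<gamma> t)\<^sup>2 = Q t + Z t" using that hg by simp
    then show ?thesis using r_def[of t] hg[of t] by (simp add: real_sqrt_divide)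
  qed
  have step: "P (Suc t) + Q (Suc t) + Z (Suc t) = 1 \<and> Q (Suc t) < P (Suc t)
      \<and> r (Suc t) \<le> r t / (1 + \<alpha> * \<bar>a t\<bar>)"
    if inv: "P t + Q t + Z t = 1" "Q t < P t" "sgn (a t) = s" "\<bar>a t\<bar> \<le> 1" for t
  proof -
    define c where "c = \<alpha> * a t"
    define k where "k = \<alpha> * \<bar>a t\<bar>"
    have kc: "k = s * c" using inv(3) s1 by (auto simp: k_def c_def sgn_if split: if_splits)
    have k0: "0 \<le> k" using alpha_pos unfolding k_def by simp
    have "\<alpha> * \<bar>a t\<bar> \<le> \<alpha> * 1" using alpha_pos inv(4) by (intro mult_left_mono) auto
    then have k1: "k \<le> 1/2" using alpha_le unfolding k_def by simp
    define W where "W = w t + c *\<^sub>R (M *v w t)"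
    define N where "N = norm W"
    have wS: "w (Suc t) = W /\<^sub>R N" using w_step[of t] by (simp add: W_def N_def c_def M_def)
    have W1: "W $ i1 = w t $ i1 + c * w t $ i2" and W2: "W $ i2 = w t $ i2 + c * w t $ i1"
      and W3: "i \<notin> {i1,i2} \<Longrightarrow> W $ i = w t $ i" for i
      using i12 by (auto simp: W_def M_def Mv)
    have PW: "PV W = (1+k)\<^sup>2 * P t" using s1 kc unfolding PV_def P_def W1 W2
      by (auto simp: power2_eq_square field_simps)
    have QW: "QV W = (1-k)\<^sup>2 * Q t" using s1 kc unfolding QV_def Q_def W1 W2
      by (auto simp: power2_eq_square field_simps)
    have ZW: "ZV W = Z t" unfolding ZV_def Z_def using W3 by (intro sum.cong) auto
    have N2: "N\<^sup>2 = (1+k)\<^sup>2 * P t + (1-k)\<^sup>2 * Q t + Z t" using nrmV[of W] PW QW ZW by (simp add: N_def)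
    have Npos: "N \<noteq> 0"
    proof
      assume "N = 0"
      then have "(1+k)\<^sup>2 * P t + (1-k)\<^sup>2 * Q t + Z t = 0" using N2 by simp
      moreover have "0 < (1+k)\<^sup>2 * P t" using k0 inv(2) QV0[of "w t"] by (simp add: Q_def)
      moreover have "0 \<le> (1-k)\<^sup>2 * Q t" using QV0[of "w t"] by (simp add: Q_def)
      moreover have "0 \<le> Z t" using ZV0 by (simp add: Z_def)
      ultimately show False by linarith
    qed
    have sc: "(W /\<^sub>R N) $ i = W $ i / N" for i by (simp add: divide_inverse mult.commute)
    have "P (Suc t) = PV W / N\<^sup>2" unfolding P_def wS PV_def sc
      by (rule scale_sq[OF Npos])
    then have PS: "P (Suc t) = (1+k)\<^sup>2 * P t / N\<^sup>2" using PW by simp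
    have "Q (Suc t) = QV W / N\<^sup>2" unfolding Q_def wS QV_def sc
      by (rule scale_sq2[OF Npos])
    then have QS: "Q (Suc t) = (1-k)\<^sup>2 * Q t / N\<^sup>2" using QW by simp
    have "Z (Suc t) = ZV W / N\<^sup>2" unfolding Z_def wS ZV_def sc
      by (simp add: power_divide sum_divide_distrib)
    then have ZS: "Z (Suc t) = Z t / N\<^sup>2" using ZW by simp
    note pq = pq_step[OF inv(2) _ _ k0 k1 N2]
    have Q0: "0 \<le> Q t" using QV0 by (simp add: Q_def)
    have Z0: "0 \<le> Z t" using ZV0 by (simp add: Z_def)
    have i1: "P (Suc t) + Q (Suc t) + Z (Suc t) = 1" using pq(2)[OF Q0 Z0] PS QS ZS by simp
    have i2: "Q (Suc t) < P (Suc t)" using pq(1)[OF Q0 Z0] PS QS by simp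
    have "r (Suc t) = sqrt ((Q (Suc t) + Z (Suc t)) / P (Suc t))"
      using i1 i2 Q0 QV0[of "w (Suc t)"] by (intro hr) (auto simp: Q_def)
    also have "\<dots> \<le> sqrt ((Q t + Z t) / P t) / (1 + k)" using pq(3)[OF Q0 Z0] PS QS ZS by simp
    also have "\<dots> = r t / (1 + \<alpha> * \<bar>a t\<bar>)" using hr[OF inv(1)] inv(2) Q0 by (simp add: k_def)
    finally show ?thesis using i1 i2 by simp
  qed
  have astep: "sgn (a (Suc t)) = s \<and> \<bar>a (Suc t)\<bar> \<le> 1 \<and> \<bar>a t\<bar> \<le> \<bar>a (Suc t)\<bar>"
    if "sgn (a t) = s" "\<bar>a t\<bar> \<le> 1" "0 < s * q t" for t
  proof -
    have "0 < \<alpha> * (s * q t)" using alpha_pos that(3) by simp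
    then show ?thesis using s1 that(1,2) a_step[of t]
      by (auto simp: clip_def sgn_if split: if_splits)
  qed
  define Inv where "Inv t = (P t + Q t + Z t = 1 \<and> Q t < P t \<and> sgn (a t) = s \<and> \<bar>a t\<bar> \<le> 1)" for t
  have Inv_all: "Inv t" for t
  proof (induction t)
    case 0
    have "P 0 + Q 0 + Z 0 = 1" using nrmV[of "w 0"] w0_unit by (simp add: P_def Q_def Z_def)
    moreover have "0 < s * q 0" using sign0 s1 by (auto simp: s_def sgn_if split: if_splits)
    ultimately show ?case using hq[of 0] a0_le by (simp add: Inv_def s_def)
  next
    case (Suc t)
    then show ?case using step[of t] astep[of t] hq[of t] by (auto simp: Inv_def)
  qed
  have Q0: "0 \<le> Q t" for t using QV0 by (simp add: Q_def)
  have Z0: "0 \<le> Z t" for t using ZV0 by (simp add: Z_def)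
  have Ppos: "0 < P t" for t using Inv_all[of t] Q0[of t] by (simp add: Inv_def)
  have sq: "0 < s * q t" for t using Inv_all[of t] hq[of t] by (simp add: Inv_def)
  have sgq: "sgn (q t) = s" for t using sq[of t] s1 by (auto simp: sgn_if)
  have amono: "\<bar>a t\<bar> \<le> \<bar>a (Suc t)\<bar>" for t using astep[of t] Inv_all[of t] sq[of t] by (simp add: Inv_def)
  have a0t: "\<bar>a 0\<bar> \<le> \<bar>a t\<bar>" for t
    by (induction t) (auto intro: order_trans[OF _ amono])
  have rnn: "0 \<le> r t" for t
    using hr[of t] Inv_all[of t] Ppos[of t] Q0[of t] Z0[of t] by (simp add: Inv_def)
  have rstep: "r (Suc t) \<le> r t / (1 + \<alpha> * \<bar>a t\<bar>)" for t
    using step[of t] Inv_all[of t] by (simp add: Inv_def)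
  have k0pos: "0 < \<alpha> * \<bar>a 0\<bar>" using alpha_pos a0_ne by simp
  have rstep2: "r t / (1 + \<alpha> * \<bar>a t\<bar>) \<le> r t / (1 + \<alpha> * \<bar>a 0\<bar>)" for t
  proof -
    have "\<alpha> * \<bar>a 0\<bar> \<le> \<alpha> * \<bar>a t\<bar>" using a0t[of t] alpha_pos by (intro mult_left_mono) auto
    then show ?thesis using rnn[of t] k0pos
      by (intro divide_left_mono) (auto intro: mult_pos_pos)
  qed
  have rbound: "r t \<le> r 0 / (1 + \<alpha> * \<bar>a 0\<bar>)^t" for t
  proof (induction t)
    case 0 then show ?case by simp
  next
    case (Suc t)
    have "r (Suc t) \<le> r t / (1 + \<alpha> * \<bar>a 0\<bar>)" using rstep[of t] rstep2[of t] by linarith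
    also have "\<dots> \<le> (r 0 / (1 + \<alpha> * \<bar>a 0\<bar>)^t) / (1 + \<alpha> * \<bar>a 0\<bar>)"
      using Suc k0pos by (intro divide_right_mono) auto
    finally show ?case by (simp add: divide_divide_eq_left mult.commute)
  qed
  have r2: "(r t)\<^sup>2 = (1 - P t) / P t" for t
  proof -
    have "(r t)\<^sup>2 = (Q t + Z t) / P t"
      using hr[of t] Inv_all[of t] Ppos[of t] Q0[of t] Z0[of t] by (simp add: Inv_def)
    then show ?thesis using Inv_all[of t] by (simp add: Inv_def algebra_simps)
  qed
  have part3: "(\<gamma> (nat \<lceil>2 / (\<alpha> * \<bar>a 0\<bar>) * ln (1 / ((\<gamma> 0)\<^sup>2 * \<epsilon>))\<rceil>))\<^sup>2 \<ge> 1 - \<epsilon>"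
    if e: "0 < \<epsilon>" "\<epsilon> < 1/2" for \<epsilon>
  proof -
    define T where "T = nat \<lceil>2 / (\<alpha> * \<bar>a 0\<bar>) * ln (1 / ((\<gamma> 0)\<^sup>2 * \<epsilon>))\<rceil>"
    have g2: "(\<gamma> t)\<^sup>2 = P t" for t using hg[of t] Ppos[of t] by simp
    have P1: "P t \<le> 1" for t using Inv_all[of t] Q0[of t] Z0[of t] by (simp add: Inv_def)
    have k1: "\<alpha> * \<bar>a 0\<bar> \<le> 1/2"
    proof -
      have "\<alpha> * \<bar>a 0\<bar> \<le> \<alpha> * 1" using alpha_pos a0_le by (intro mult_left_mono) auto
      then show ?thesis using alpha_le by simp
    qed
    have R0: "(r 0)\<^sup>2 \<le> 1 / P 0" using r2[of 0] Ppos[of 0] by (simp add: divide_right_mono)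
    have "(r T)\<^sup>2 \<le> \<epsilon>"
      by (rule final_bound[OF Ppos[of 0] P1[of 0] e k0pos k1 rnn[of T] rbound[of T] R0])
        (simp add: T_def g2)
    then have "(1 - P T) / P T \<le> \<epsilon>" using r2[of T] by simp
    then have "1 - P T \<le> \<epsilon> * P T" using Ppos[of T] by (simp add: divide_le_eq)
    also have "\<dots> \<le> \<epsilon>" using P1[of T] e by (simp add: mult_left_le)
    finally show ?thesis unfolding T_def[symmetric] using g2[of T] by simp
  qed
  show ?thesis
    using Inv_all sgq amono rstep rstep2 part3 by (auto simp: Inv_def s_def)
qed
end
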